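(* Let $(R,\mathfrak m,k)$ be a commutative noetherian local ring with $\mathfrak m^4=0$ and $\mu(\mathfrak m)=e\ge3$. (1) If $H_R(-1)=0$ and an exact zero divisor $a$ lies in $\mathfrak m\smallsetminus\mathfrak m^2$, then every complementary divisor of $a$ also lies in $\mathfrak m\smallsetminus\mathfrak m^2$. (2) If $\mu(\mathfrak m^3)+2\le e$, then no non-zero exact zero divisor of $R$ is contained in $\mathfrak m^2$.
   Context: $H_R(t)=\sum_{n\ge0}\operatorname{rank}_k(\mathfrak m^n/\mathfrak m^{n+1})t^n$ is the Hilbert series of $R$, and $\mu(N)$ is the minimal number of generators of $N$. An element $a\in R$ is an exact zero divisor if $R\neq(0:_R a)\cong R/aR\neq0$; equivalently there exists $b\in R$ with $(0:_R a)=bR$ and $(0:_R b)=aR$, and any such $b$ is called a complementary divisor of $a$. *)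

theory Defs
  imports Main
begin

text \<open>The commutative ring R is the whole carrier of a type 'a :: comm_ring_1.\<close>

definition is_ideal :: "'a::comm_ring_1 set \<Rightarrow> bool" where
  "is_ideal I \<longleftrightarrow> 0 \<in> I \<and> (\<forall>x\<in>I. \<forall>y\<in>I. x + y \<in> I) \<and> (\<forall>r. \<forall>x\<in>I. r * x \<in> I)"

definition ideal_gen :: "'a::comm_ring_1 set \<Rightarrow> 'a set" where
  "ideal_gen S = \<Inter> {I. is_ideal I \<and> S \<subseteq> I}"

definition principal :: "'a::comm_ring_1 \<Rightarrow> 'a set" where
  "principal a = {r * a | r. True}"

definition ann :: "'a::comm_ring_1 \<Rightarrow> 'a set" where
  "ann a = {x. x * a = 0}"

definition noetherian_ring :: "'a::comm_ring_1 itself \<Rightarrow> bool" where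
  "noetherian_ring _ \<longleftrightarrow> (\<forall>I::'a set. is_ideal I \<longrightarrow> (\<exists>S. finite S \<and> ideal_gen S = I))"

definition max_ideal :: "'a::comm_ring_1 set" where
  "max_ideal = {x. \<not> x dvd 1}"

text \<open>Local: the non-units form an ideal (equivalently, there is a unique maximal ideal).\<close>
definition local_ring :: "'a::comm_ring_1 itself \<Rightarrow> bool" where
  "local_ring _ \<longleftrightarrow> (0::'a) \<noteq> 1 \<and> is_ideal (max_ideal :: 'a set)"

definition ideal_prod :: "'a::comm_ring_1 set \<Rightarrow> 'a set \<Rightarrow> 'a set" where
  "ideal_prod I J = ideal_gen {x * y | x y. x \<in> I \<and> y \<in> J}"

primrec ideal_pow :: "'a::comm_ring_1 set \<Rightarrow> nat \<Rightarrow> 'a set" where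
  "ideal_pow I 0 = UNIV"
| "ideal_pow I (Suc n) = ideal_prod (ideal_pow I n) I"

definition mu :: "'a::comm_ring_1 set \<Rightarrow> nat" where
  "mu N = (LEAST n. \<exists>S. finite S \<and> card S = n \<and> ideal_gen S = N)"

text \<open>rank_k(m^n/m^(n+1)): the dimension of the k-vector space m^n/m^(n+1), i.e. the minimal
  size of a spanning set; the k-span of the classes of S \<subseteq> m^n is (ideal_gen S + m^(n+1))/m^(n+1).\<close>
definition hilbert_fun :: "'a::comm_ring_1 itself \<Rightarrow> nat \<Rightarrow> nat" where
  "hilbert_fun _ n = (LEAST d. \<exists>S::'a set. finite S \<and> card S = d \<and>
      S \<subseteq> ideal_pow max_ideal n \<and>
      ideal_pow max_ideal n = {x + y | x y. x \<in> ideal_gen S \<and> y \<in> ideal_pow max_ideal (Suc n)})"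

text \<open>H_R(-1), meaningful when H_R is a polynomial (finitely many nonzero coefficients).\<close>
definition hilbert_series_at_neg1 :: "'a::comm_ring_1 itself \<Rightarrow> int" where
  "hilbert_series_at_neg1 T = (\<Sum>n\<in>{n. hilbert_fun T n \<noteq> 0}. (-1) ^ n * int (hilbert_fun T n))"

text \<open>Exact zero divisor: R \<noteq> (0:a), R/aR \<noteq> 0, and (0:a) \<cong> R/aR as R-modules; an R-isomorphism
  R/aR \<rightarrow> (0:a) is the same as an R-linear map R \<rightarrow> R with image (0:a) and kernel aR.\<close>
definition exact_zero_divisor :: "'a::comm_ring_1 \<Rightarrow> bool" where
  "exact_zero_divisor a \<longleftrightarrow> ann a \<noteq> UNIV \<and> principal a \<noteq> UNIV \<and>
     (\<exists>f::'a \<Rightarrow> 'a. (\<forall>x y. f (x + y) = f x + f y) \<and> (\<forall>r x. f (r * x) = r * f x) \<and>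
        range f = ann a \<and> {x. f x = 0} = principal a)"

definition complementary_divisor :: "'a::comm_ring_1 \<Rightarrow> 'a \<Rightarrow> bool" where
  "complementary_divisor a b \<longleftrightarrow> ann a = principal b \<and> ann b = principal a"

end

theory Submission
  imports Defs
begin

lemma idealD:
  assumes "is_ideal I"
  shows "0 \<in> I" "x \<in> I \<Longrightarrow> y \<in> I \<Longrightarrow> x + y \<in> I" "x \<in> I \<Longrightarrow> r * x \<in> I"
  using assms unfolding is_ideal_def by auto

lemma ideal_mult_right: "is_ideal I \<Longrightarrow> x \<in> I \<Longrightarrow> x * r \<in> I"
  by (metis idealD(3) mult.commute)

lemma ideal_neg: "is_ideal I \<Longrightarrow> x \<in> I \<Longrightarrow> - x \<in> I"
  by (metis idealD(3) mult_minus1)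

lemma ideal_diff: "is_ideal I \<Longrightarrow> x \<in> I \<Longrightarrow> y \<in> I \<Longrightarrow> x - y \<in> I"
  by (metis diff_conv_add_uminus idealD(2) ideal_neg)

lemma ideal_gen_ideal: "is_ideal (ideal_gen S)"
  unfolding is_ideal_def ideal_gen_def by auto

lemma ideal_gen_sub: "S \<subseteq> ideal_gen S"
  unfolding ideal_gen_def by auto

lemma ideal_gen_least: "is_ideal I \<Longrightarrow> S \<subseteq> I \<Longrightarrow> ideal_gen S \<subseteq> I"
  unfolding ideal_gen_def by auto

lemma ideal_gen_empty: "ideal_gen {} = {0::'a::comm_ring_1}"
proof -
  have "is_ideal {0::'a}" unfolding is_ideal_def by auto
  then have "ideal_gen {} \<subseteq> {0::'a}" by (rule ideal_gen_least) auto
  moreover have "0 \<in> ideal_gen ({}::'a set)" using idealD(1)[OF ideal_gen_ideal] .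
  ultimately show ?thesis by auto
qed

lemma is_idealI:
  assumes "0 \<in> I" "\<And>x y. x \<in> I \<Longrightarrow> y \<in> I \<Longrightarrow> x + y \<in> I" "\<And>r x. x \<in> I \<Longrightarrow> r * x \<in> I"
  shows "is_ideal I"
  using assms unfolding is_ideal_def by blast

lemma ideal_gen_single: "ideal_gen {c} \<subseteq> {r * c | r. True}"
proof (rule ideal_gen_least)
  show "is_ideal {r * c | r. True}"
  proof (rule is_idealI)
    show "0 \<in> {r * c | r. True}" by (rule CollectI, rule exI[of _ 0]) simp
  next
    fix x y assume "x \<in> {r * c | r. True}" "y \<in> {r * c | r. True}"
    then obtain r1 r2 where "x = r1 * c" "y = r2 * c" by blast
    then show "x + y \<in> {r * c | r. True}" by (intro CollectI exI[of _ "r1 + r2"]) (simp add: distrib_right)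
  next
    fix r x assume "x \<in> {r * c | r. True}"
    then obtain r1 where "x = r1 * c" by blast
    then show "r * x \<in> {r * c | r. True}" by (intro CollectI exI[of _ "r * r1"]) (simp add: mult.assoc)
  qed
  show "{c} \<subseteq> {r * c | r. True}" by (auto intro!: exI[of _ 1])
qed

lemma ideal_gen_one: "ideal_gen {1::'a::comm_ring_1} = UNIV"
  using idealD(3)[OF ideal_gen_ideal, of 1 "{1::'a}"] ideal_gen_sub[of "{1::'a}"] by auto

lemma ideal_prod_mem: "x \<in> I \<Longrightarrow> y \<in> J \<Longrightarrow> x * y \<in> ideal_prod I J"
proof -
  assume "x \<in> I" "y \<in> J"
  then have "x * y \<in> {x * y |x y. x \<in> I \<and> y \<in> J}" by blast
  then show ?thesis unfolding ideal_prod_def by (rule subsetD[OF ideal_gen_sub])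
qed

lemma ideal_prod_least:
  assumes "is_ideal K" "\<And>x y. x \<in> I \<Longrightarrow> y \<in> J \<Longrightarrow> x * y \<in> K"
  shows "ideal_prod I J \<subseteq> K"
  unfolding ideal_prod_def
proof (rule ideal_gen_least[OF assms(1)])
  show "{x * y |x y. x \<in> I \<and> y \<in> J} \<subseteq> K" using assms(2) by blast
qed

lemma prod_ideal: "is_ideal (ideal_prod I J)"
  by (simp add: ideal_prod_def ideal_gen_ideal)

lemma pow_ideal: "is_ideal (ideal_pow I n)"
proof (cases n)
  case 0 then show ?thesis by (simp add: is_ideal_def)
next
  case (Suc k) then show ?thesis by (simp add: prod_ideal)
qed

lemma pow1: "is_ideal I \<Longrightarrow> ideal_pow I 1 = I"
proof -
  assume I: "is_ideal I"
  have "ideal_pow I 1 = ideal_prod UNIV I" by simp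
  moreover have "ideal_prod UNIV I \<subseteq> I" by (rule ideal_prod_least[OF I]) (simp add: I idealD(3))
  moreover have "I \<subseteq> ideal_prod UNIV I"
  proof
    fix x assume "x \<in> I"
    then have "1 * x \<in> ideal_prod UNIV I" by (intro ideal_prod_mem) auto
    then show "x \<in> ideal_prod UNIV I" by simp
  qed
  ultimately show ?thesis by auto
qed

lemma pow_Suc_sub: "ideal_pow I (Suc n) \<subseteq> ideal_pow I n"
  unfolding ideal_pow.simps by (rule ideal_prod_least[OF pow_ideal], rule ideal_mult_right[OF pow_ideal])

lemma pow_antimono: "m \<le> n \<Longrightarrow> ideal_pow I n \<subseteq> ideal_pow I m"
proof (induction n)
  case 0 then show ?case by simp
next
  case (Suc n)
  then show ?case using pow_Suc_sub[of I n] by (metis le_Suc_eq order.refl order_trans)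
qed

lemma ideal_left_mult: "is_ideal K \<Longrightarrow> is_ideal {y. x * y \<in> K}"
  by (rule is_idealI) (auto simp: distrib_left mult.left_commute idealD)

lemma ideal_mod:
  assumes I: "is_ideal I" and K: "is_ideal K"
  shows "is_ideal {y. \<exists>z\<in>I. y - z \<in> K}"
  unfolding is_ideal_def
proof (intro conjI ballI allI)
  show "0 \<in> {y. \<exists>z\<in>I. y - z \<in> K}" using idealD(1)[OF I] idealD(1)[OF K] by force
next
  fix x y assume "x \<in> {y. \<exists>z\<in>I. y - z \<in> K}" "y \<in> {y. \<exists>z\<in>I. y - z \<in> K}"
  then obtain z1 z2 where "z1 \<in> I" "x - z1 \<in> K" "z2 \<in> I" "y - z2 \<in> K" by auto
  moreover have "x + y - (z1 + z2) = (x - z1) + (y - z2)" by (simp add: algebra_simps)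
  ultimately show "x + y \<in> {y. \<exists>z\<in>I. y - z \<in> K}"
    using idealD(2)[OF I] idealD(2)[OF K] by (metis (mono_tags, lifting) mem_Collect_eq)
next
  fix r x assume "x \<in> {y. \<exists>z\<in>I. y - z \<in> K}"
  then obtain z where "z \<in> I" "x - z \<in> K" by auto
  moreover have "r * x - r * z = r * (x - z)" by (simp add: algebra_simps)
  ultimately show "r * x \<in> {y. \<exists>z\<in>I. y - z \<in> K}"
    using idealD(3)[OF I] idealD(3)[OF K] by (metis (mono_tags, lifting) mem_Collect_eq)
qed

lemma pow_mult:
  assumes I: "is_ideal I" and x: "x \<in> ideal_pow I i"
  shows "y \<in> ideal_pow I j \<Longrightarrow> x * y \<in> ideal_pow I (i + j)"
proof (induction j arbitrary: y)
  case 0 then show ?case using x by (simp add: ideal_mult_right[OF pow_ideal])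
next
  case (Suc j)
  have "ideal_pow I (Suc j) \<subseteq> {y. x * y \<in> ideal_pow I (i + Suc j)}"
  proof (simp only: ideal_pow.simps, rule ideal_prod_least[OF ideal_left_mult[OF pow_ideal]])
    fix p q assume p: "p \<in> ideal_pow I j" and q: "q \<in> I"
    have "x * p * q \<in> ideal_prod (ideal_pow I (i + j)) I"
      by (rule ideal_prod_mem[OF Suc.IH[OF p] q])
    then show "p * q \<in> {y. x * y \<in> ideal_pow I (i + Suc j)}" by (simp add: mult.assoc)
  qed
  then show ?case using Suc.prems by auto
qed

lemma pull:
  assumes "\<forall>s\<in>S. s = c * u s" "z \<in> ideal_gen S"
  shows "\<exists>y\<in>ideal_gen (u ` S). z = c * y"
proof -
  let ?J = "{z. \<exists>y\<in>ideal_gen (u ` S). z = c * y}"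
  have G: "is_ideal (ideal_gen (u ` S))" by (rule ideal_gen_ideal)
  have "is_ideal ?J"
  proof (rule is_idealI)
    show "0 \<in> ?J" using idealD(1)[OF G] by (intro CollectI bexI[of _ 0]) auto
  next
    fix x y assume "x \<in> ?J" "y \<in> ?J"
    then obtain r1 r2 where "r1 \<in> ideal_gen (u ` S)" "r2 \<in> ideal_gen (u ` S)" "x = c * r1" "y = c * r2" by blast
    then show "x + y \<in> ?J" using idealD(2)[OF G] by (intro CollectI bexI[of _ "r1 + r2"]) (auto simp: distrib_left)
  next
    fix r x assume "x \<in> ?J"
    then obtain r1 where "r1 \<in> ideal_gen (u ` S)" "x = c * r1" by blast
    then show "r * x \<in> ?J" using idealD(3)[OF G] by (intro CollectI bexI[of _ "r * r1"]) (auto simp: mult.left_commute)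
  qed
  moreover have "S \<subseteq> ?J"
    using assms(1) ideal_gen_sub[of "u ` S"] by auto
  ultimately show ?thesis using ideal_gen_least assms(2) by blast
qed


lemma ideal_gen_mono: "A \<subseteq> B \<Longrightarrow> ideal_gen A \<subseteq> ideal_gen B"
  by (meson ideal_gen_ideal ideal_gen_least ideal_gen_sub order_trans)

lemma ideal_times: "is_ideal I \<Longrightarrow> is_ideal {t * c | t. t \<in> I}"
proof (rule is_idealI)
  assume I: "is_ideal I"
  show "0 \<in> {t * c | t. t \<in> I}" using idealD(1)[OF I] by (intro CollectI exI[of _ 0]) simp
  fix x y assume "x \<in> {t * c | t. t \<in> I}" "y \<in> {t * c | t. t \<in> I}"
  then obtain r1 r2 where "x = r1 * c" "y = r2 * c" "r1 \<in> I" "r2 \<in> I" by blast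
  then show "x + y \<in> {t * c | t. t \<in> I}" using idealD(2)[OF I]
    by (intro CollectI exI[of _ "r1 + r2"]) (simp add: distrib_right)
next
  assume I: "is_ideal I"
  fix r x assume "x \<in> {t * c | t. t \<in> I}"
  then obtain r1 where "x = r1 * c" "r1 \<in> I" by blast
  then show "r * x \<in> {t * c | t. t \<in> I}" using idealD(3)[OF I]
    by (intro CollectI exI[of _ "r * r1"]) (simp add: mult.assoc)
qed

lemma mult_gen: "x \<in> ideal_gen S \<Longrightarrow> a * x \<in> ideal_gen ((\<lambda>s. a * s) ` S)"
proof -
  assume x: "x \<in> ideal_gen S"
  have "ideal_gen S \<subseteq> {x. a * x \<in> ideal_gen ((\<lambda>s. a * s) ` S)}"
  proof (rule ideal_gen_least[OF ideal_left_mult[OF ideal_gen_ideal]])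
    show "S \<subseteq> {x. a * x \<in> ideal_gen ((\<lambda>s. a * s) ` S)}"
    proof
      fix s assume "s \<in> S"
      then have "a * s \<in> (\<lambda>s. a * s) ` S" by blast
      then show "s \<in> {x. a * x \<in> ideal_gen ((\<lambda>s. a * s) ` S)}"
        using ideal_gen_sub[of "(\<lambda>s. a * s) ` S"] by auto
    qed
  qed
  then show ?thesis using x by blast
qed

lemma principal_unit: "b dvd 1 \<Longrightarrow> principal b = UNIV"
proof -
  assume "b dvd 1"
  then obtain k where k: "1 = b * k" by (auto simp: dvd_def)
  have "x \<in> principal b" for x
  proof -
    have "x = x * (b * k)" using k by simp
    then have "x = (x * k) * b" by (simp add: ac_simps)
    then show ?thesis unfolding principal_def by blast
  qed
  then show ?thesis by blast
qed

lemma ezd_b: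
  assumes "exact_zero_divisor a"
  shows "\<exists>b. ann a = principal b \<and> ann b = principal a"
proof -
  obtain f :: "'a \<Rightarrow> 'a" where f: "\<forall>r x. f (r * x) = r * f x" "range f = ann a" "{x. f x = 0} = principal a"
    using assms unfolding exact_zero_divisor_def by blast
  obtain b where b: "b = f 1" by blast
  have fr: "f r = r * b" for r using spec[OF spec[OF f(1), of r], of 1] b by simp
  have "range f = principal b" unfolding principal_def using fr by auto
  moreover have "{x. f x = 0} = ann b" unfolding ann_def using fr by auto
  ultimately have "ann a = principal b \<and> ann b = principal a" using f(2,3) by simp
  then show ?thesis by blast
qed

lemma mu_wit:
  assumes "\<exists>S. finite S \<and> ideal_gen S = N"
  shows "\<exists>S. finite S \<and> card S = mu N \<and> ideal_gen S = N"
proof -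
  from assms obtain S where "finite S" "ideal_gen S = N" by blast
  then have "\<exists>n S. finite S \<and> card S = n \<and> ideal_gen S = N" by blast
  then show ?thesis unfolding mu_def by (rule LeastI_ex)
qed

lemma mu_le: "finite S \<Longrightarrow> ideal_gen S = N \<Longrightarrow> mu N \<le> card S"
  unfolding mu_def by (rule Least_le) blast

lemma powSuc': "ideal_pow I (k + 1) = ideal_prod (ideal_pow I k) I"
  by simp

declare ideal_pow.simps(2)[simp del]

locale L4 =
  fixes T :: "'a::comm_ring_1 itself"
  assumes loc: "local_ring T" and noeth: "noetherian_ring T"
    and m4: "ideal_pow (max_ideal :: 'a set) 4 = {0}"
begin

abbreviation M :: "'a set" where "M \<equiv> max_ideal"

lemma mI: "is_ideal M"
  using loc unfolding local_ring_def by (rule conjunct2)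

lemma memM: "x \<in> M \<longleftrightarrow> \<not> x dvd 1"
  unfolding max_ideal_def by simp

lemma P1: "ideal_pow M 1 = M" by (rule pow1[OF mI])

lemma prodM: "x \<in> ideal_pow M i \<Longrightarrow> y \<in> ideal_pow M j \<Longrightarrow> x * y \<in> ideal_pow M (i + j)"
  by (rule pow_mult[OF mI])

lemma n11: "(1::nat) + 1 = 2" by simp
lemma n21: "(2::nat) + 1 = 3" by simp
lemma n12: "(1::nat) + 2 = 3" by simp
lemma n22: "(2::nat) + 2 = 4" by simp

lemma prod11: "x \<in> M \<Longrightarrow> y \<in> M \<Longrightarrow> x * y \<in> ideal_pow M 2"
  using prodM[of x 1 y 1] unfolding P1 n11 .

lemma prod21: "x \<in> ideal_pow M 2 \<Longrightarrow> y \<in> M \<Longrightarrow> x * y \<in> ideal_pow M 3"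
  using prodM[of x 2 y 1] unfolding P1 n21 .

lemma prod12: "x \<in> M \<Longrightarrow> y \<in> ideal_pow M 2 \<Longrightarrow> x * y \<in> ideal_pow M 3"
  using prodM[of x 1 y 2] unfolding P1 n12 .

lemma prod22: "x \<in> ideal_pow M 2 \<Longrightarrow> y \<in> ideal_pow M 2 \<Longrightarrow> x * y = 0"
  using prodM[of x 2 y 2] unfolding n22 m4 by simp

lemma zero_pow: "n \<ge> 4 \<Longrightarrow> ideal_pow M n = {0}"
proof -
  assume "n \<ge> 4"
  then have "ideal_pow M n \<subseteq> ideal_pow M 4" by (rule pow_antimono)
  then have "ideal_pow M n \<subseteq> {0}" unfolding m4 .
  moreover have "0 \<in> ideal_pow M n" by (rule idealD(1)[OF pow_ideal])
  ultimately show ?thesis by blast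
qed

lemma sub_M: "n \<ge> 1 \<Longrightarrow> ideal_pow M n \<subseteq> M"
  using pow_antimono[of 1 n M] P1 by simp

lemma M2M: "ideal_pow M 2 \<subseteq> M" using sub_M by simp
lemma M3M2: "ideal_pow M 3 \<subseteq> ideal_pow M 2" using pow_antimono[of 2 3 M] by simp

lemma fg: "is_ideal (I::'a set) \<Longrightarrow> \<exists>S. finite S \<and> ideal_gen S = I"
proof -
  assume I: "is_ideal I"
  have "\<forall>I::'a set. is_ideal I \<longrightarrow> (\<exists>S. finite S \<and> ideal_gen S = I)"
    using noeth unfolding noetherian_ring_def .
  then show ?thesis using I by simp
qed

lemma unit_arg: "r * c \<in> ideal_pow M 2 \<Longrightarrow> c \<notin> ideal_pow M 2 \<Longrightarrow> r \<in> M"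
proof (rule ccontr)
  assume a: "r * c \<in> ideal_pow M 2" "c \<notin> ideal_pow M 2" "r \<notin> M"
  then have "r dvd 1" using memM by blast
  then obtain k where k: "1 = r * k" by (auto simp: dvd_def)
  have "c = (k * r) * c" using k by (simp add: ac_simps)
  then have "c = k * (r * c)" by (simp add: ac_simps)
  moreover have "k * (r * c) \<in> ideal_pow M 2" by (rule idealD(3)[OF pow_ideal a(1)])
  ultimately show False using a(2) by simp
qed

lemma principal_sub: "is_ideal I \<Longrightarrow> c \<in> I \<Longrightarrow> principal c \<subseteq> I"
proof
  fix x assume I: "is_ideal I" "c \<in> I" "x \<in> principal c"
  then obtain r where "x = r * c" unfolding principal_def by blast
  then show "x \<in> I" using idealD(3)[OF I(1) I(2)] by simp
qed

lemma nak_step: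
  assumes I: "is_ideal I" and H: "\<forall>x\<in>ideal_pow M k. \<exists>z\<in>I. x - z \<in> ideal_pow M (k + 1)"
  shows "\<forall>x\<in>ideal_pow M (k + 1). \<exists>z\<in>I. x - z \<in> ideal_pow M (k + 2)"
proof -
  have "ideal_prod (ideal_pow M k) M \<subseteq> {y. \<exists>z\<in>I. y - z \<in> ideal_pow M (k + 2)}"
  proof (rule ideal_prod_least[OF ideal_mod[OF I pow_ideal]])
    fix p q assume p: "p \<in> ideal_pow M k" and q: "q \<in> M"
    obtain z where z: "z \<in> I" "p - z \<in> ideal_pow M (k + 1)" using H p by blast
    have "(p - z) * q \<in> ideal_pow M (k + 1 + 1)" using prodM[OF z(2), of q 1] q P1 by simp
    moreover have "p * q - z * q = (p - z) * q" by (simp add: algebra_simps)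
    ultimately show "p * q \<in> {y. \<exists>z\<in>I. y - z \<in> ideal_pow M (k + 2)}"
      using ideal_mult_right[OF I z(1)] by (intro CollectI bexI[of _ "z * q"]) (auto simp: add.assoc)
  qed
  then show ?thesis by (simp only: powSuc') blast
qed

lemma nak:
  assumes I: "is_ideal I" and H: "\<forall>x\<in>M. \<exists>z\<in>I. x - z \<in> ideal_pow M 2"
  shows "M \<subseteq> I"
proof -
  have H1: "\<forall>x\<in>ideal_pow M 1. \<exists>z\<in>I. x - z \<in> ideal_pow M (1 + 1)" using H unfolding P1 n11 .
  have H2: "\<forall>x\<in>ideal_pow M 2. \<exists>z\<in>I. x - z \<in> ideal_pow M (2 + 1)"
    using nak_step[OF I H1] unfolding n11 by (simp only: numeral_Bit0 numeral_One add.assoc)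
  have H3: "\<forall>x\<in>ideal_pow M 3. \<exists>z\<in>I. x - z \<in> ideal_pow M 4"
    using nak_step[OF I H2] unfolding n21 by (simp only: numeral_Bit0 numeral_Bit1 numeral_One add.assoc)
  have S3: "ideal_pow M 3 \<subseteq> I"
  proof
    fix x assume "x \<in> ideal_pow M 3"
    then obtain z where "z \<in> I" "x - z \<in> ideal_pow M 4" using H3 by blast
    then show "x \<in> I" using m4 by simp
  qed
  have S2: "ideal_pow M 2 \<subseteq> I"
  proof
    fix x assume "x \<in> ideal_pow M 2"
    then obtain z where "z \<in> I" "x - z \<in> I" using H2 S3 unfolding n21 by blast
    then show "x \<in> I" using idealD(2)[OF I] by (metis diff_add_cancel)
  qed
  show "M \<subseteq> I"
  proof
    fix x assume "x \<in> M"
    then obtain z where "z \<in> I" "x - z \<in> I" using H S2 by blast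
    then show "x \<in> I" using idealD(2)[OF I] by (metis diff_add_cancel)
  qed
qed

lemma mu_bound:
  assumes "finite S" "S \<subseteq> M" "\<forall>x\<in>M. \<exists>z\<in>ideal_gen S. x - z \<in> ideal_pow M 2"
  shows "mu M \<le> card S"
proof -
  have "M \<subseteq> ideal_gen S" by (rule nak[OF ideal_gen_ideal assms(3)])
  moreover have "ideal_gen S \<subseteq> M" by (rule ideal_gen_least[OF mI assms(2)])
  ultimately show ?thesis using mu_le[OF assms(1)] by auto
qed


lemma hf_le:
  assumes "finite S" "S \<subseteq> ideal_pow M n"
    "ideal_pow M n = {x + y |x y. x \<in> ideal_gen S \<and> y \<in> ideal_pow M (Suc n)}"
  shows "hilbert_fun T n \<le> card S"
  unfolding hilbert_fun_def by (rule Least_le) (use assms in blast)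

lemma hf_wit:
  "\<exists>S. finite S \<and> card S = hilbert_fun T n \<and> S \<subseteq> ideal_pow M n \<and>
     ideal_pow M n = {x + y |x y. x \<in> ideal_gen S \<and> y \<in> ideal_pow M (Suc n)}"
proof -
  obtain S where S: "finite S" "ideal_gen S = ideal_pow M n" using fg[OF pow_ideal] by blast
  have sub: "S \<subseteq> ideal_pow M n" using ideal_gen_sub S(2) by blast
  have eq: "ideal_pow M n = {x + y |x y. x \<in> ideal_gen S \<and> y \<in> ideal_pow M (Suc n)}"
  proof
    show "ideal_pow M n \<subseteq> {x + y |x y. x \<in> ideal_gen S \<and> y \<in> ideal_pow M (Suc n)}"
    proof
      fix x assume "x \<in> ideal_pow M n"
      moreover have "(0::'a) \<in> ideal_pow M (Suc n)" by (rule idealD(1)[OF pow_ideal])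
      ultimately show "x \<in> {x + y |x y. x \<in> ideal_gen S \<and> y \<in> ideal_pow M (Suc n)}"
        using S(2) by (intro CollectI exI[of _ x] exI[of _ 0]) simp
    qed
    show "{x + y |x y. x \<in> ideal_gen S \<and> y \<in> ideal_pow M (Suc n)} \<subseteq> ideal_pow M n"
    proof
      fix z assume "z \<in> {x + y |x y. x \<in> ideal_gen S \<and> y \<in> ideal_pow M (Suc n)}"
      then obtain x y where "z = x + y" "x \<in> ideal_pow M n" "y \<in> ideal_pow M (Suc n)" using S(2) by blast
      then show "z \<in> ideal_pow M n" using pow_Suc_sub[of M n] idealD(2)[OF pow_ideal] by blast
    qed
  qed
  have "\<exists>d S. finite S \<and> card S = d \<and> S \<subseteq> ideal_pow M n \<and>
     ideal_pow M n = {x + y |x y. x \<in> ideal_gen S \<and> y \<in> ideal_pow M (Suc n)}"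
    using S(1) sub eq by blast
  then show ?thesis unfolding hilbert_fun_def by (rule LeastI_ex)
qed

lemma ann_ne: "exact_zero_divisor a \<Longrightarrow> ann a \<noteq> UNIV"
  unfolding exact_zero_divisor_def by blast

lemma bM:
  assumes "exact_zero_divisor a" "ann a = principal b"
  shows "b \<in> M"
proof (rule ccontr)
  assume "b \<notin> M"
  then have "b dvd 1" using memM by blast
  then show False using principal_unit ann_ne assms by metis
qed

lemma annD: "x \<in> ann c \<longleftrightarrow> x * c = 0" unfolding ann_def by simp
lemma principalD: "x \<in> principal c \<longleftrightarrow> (\<exists>r. x = r * c)" unfolding principal_def by simp

lemma M3_eq: "ideal_pow M 3 = ideal_prod (ideal_pow M 2) M"
  using powSuc'[of M 2] unfolding n21 .

lemma part2:
  assumes ezd: "exact_zero_divisor a" and a2: "a \<in> ideal_pow M 2"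
    and e: "mu (ideal_pow M 3) + 2 \<le> mu M"
  shows False
proof -
  obtain b where ab: "ann a = principal b" "ann b = principal a" using ezd_b[OF ezd] by blast
  have b: "b \<in> M" by (rule bM[OF ezd ab(1)])
  have aM: "a \<in> M" using a2 M2M by blast
  obtain S where S: "finite S" "card S = mu (ideal_pow M 3)" "ideal_gen S = ideal_pow M 3"
    using mu_wit[OF fg[OF pow_ideal]] by blast
  show False
  proof (cases "b \<in> ideal_pow M 2")
    case True
    have B1: "\<exists>r. y = r * a" if "y \<in> ideal_pow M 2" for y
    proof -
      have "y * b = 0" by (rule prod22[OF that True])
      then have "y \<in> principal a" using ab(2) annD by blast
      then show ?thesis using principalD by blast
    qed
    have B2: "ideal_pow M 3 \<subseteq> {t * a | t. t \<in> M}"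
      unfolding M3_eq
    proof (rule ideal_prod_least[OF ideal_times[OF mI]])
      fix z w assume z: "z \<in> ideal_pow M 2" and w: "w \<in> M"
      obtain r where r: "z = r * a" using B1[OF z] by blast
      have "z * w = (r * w) * a" using r by (simp add: ac_simps)
      moreover have "r * w \<in> M" by (rule idealD(3)[OF mI w])
      ultimately show "z * w \<in> {t * a | t. t \<in> M}" by blast
    qed
    have "\<forall>s\<in>S. \<exists>t. t \<in> M \<and> s = a * t"
    proof
      fix s assume "s \<in> S"
      then have "s \<in> ideal_pow M 3" using S(3) ideal_gen_sub by blast
      then obtain t where "t \<in> M" "s = t * a" using B2 by blast
      then show "\<exists>t. t \<in> M \<and> s = a * t" by (metis mult.commute)
    qed
    then obtain u where u: "\<forall>s\<in>S. u s \<in> M \<and> s = a * u s" by (metis bchoice)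
    have key: "\<forall>x\<in>M. \<exists>z\<in>ideal_gen (u ` S). x - z \<in> ideal_pow M 2"
    proof
      fix x assume x: "x \<in> M"
      have "a * x \<in> ideal_gen S" using prod21[OF a2 x] S(3) by simp
      then obtain y where y: "y \<in> ideal_gen (u ` S)" "a * x = a * y" using pull[of S a u] u by blast
      have "(x - y) * a = 0" using y(2) by (simp add: algebra_simps)
      then have "x - y \<in> principal b" using ab(1) annD by blast
      then have "x - y \<in> ideal_pow M 2" using principal_sub[OF pow_ideal True] by blast
      then show "\<exists>z\<in>ideal_gen (u ` S). x - z \<in> ideal_pow M 2" using y(1) by blast
    qed
    have "mu M \<le> card (u ` S)" by (rule mu_bound[OF finite_imageI[OF S(1)] _ key]) (use u in blast)
    also have "\<dots> \<le> card S" by (rule card_image_le[OF S(1)])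
    finally show False using S(2) e by simp
  next
    case False
    have C1: "\<exists>r. r \<in> M \<and> y = r * b" if "y \<in> ideal_pow M 2" for y
    proof -
      have "y * a = 0" by (rule prod22[OF that a2])
      then have "y \<in> principal b" using ab(1) annD by blast
      then obtain r where r: "y = r * b" using principalD by blast
      then have "r \<in> M" using unit_arg[of r b] that False by blast
      then show ?thesis using r by blast
    qed
    obtain v where v: "v \<in> M" "a = v * b" using C1[OF a2] by blast
    have C2: "ideal_pow M 3 \<subseteq> {t * b | t. t \<in> ideal_pow M 2}"
      unfolding M3_eq
    proof (rule ideal_prod_least[OF ideal_times[OF pow_ideal]])
      fix z w assume z: "z \<in> ideal_pow M 2" and w: "w \<in> M"
      obtain r where r: "r \<in> M" "z = r * b" using C1[OF z] by blast
      have "z * w = (r * w) * b" using r by (simp add: ac_simps)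
      moreover have "r * w \<in> ideal_pow M 2" by (rule prod11[OF r(1) w])
      ultimately show "z * w \<in> {t * b | t. t \<in> ideal_pow M 2}" by blast
    qed
    have "\<forall>s\<in>S. \<exists>t. t \<in> M \<and> s = (b * b) * t"
    proof
      fix s assume "s \<in> S"
      then have "s \<in> ideal_pow M 3" using S(3) ideal_gen_sub by blast
      then obtain t where t: "t \<in> ideal_pow M 2" "s = t * b" using C2 by blast
      then obtain r where r: "r \<in> M" "t = r * b" using C1 by blast
      have "s = (b * b) * r" using t(2) r(2) by (simp add: ac_simps)
      then show "\<exists>t. t \<in> M \<and> s = (b * b) * t" using r(1) by blast
    qed
    then obtain u where u: "\<forall>s\<in>S. u s \<in> M \<and> s = (b * b) * u s" by (metis bchoice)
    have key: "\<forall>x\<in>M. \<exists>z\<in>ideal_gen (insert v (u ` S)). x - z \<in> ideal_pow M 2"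
    proof
      fix x assume x: "x \<in> M"
      have "(b * b) * x \<in> ideal_gen S" using prod21[OF prod11[OF b b] x] S(3) by simp
      then obtain y where y: "y \<in> ideal_gen (u ` S)" "(b * b) * x = (b * b) * y"
        using pull[of S "b * b" u] u by blast
      have "(b * (x - y)) * b = 0" using y(2) by (simp add: algebra_simps)
      then have "b * (x - y) \<in> principal a" using ab(2) annD by blast
      then obtain k where k: "b * (x - y) = k * a" using principalD by blast
      have "(x - y - k * v) * b = b * (x - y) - k * (v * b)" by (simp add: algebra_simps)
      also have "\<dots> = 0" using k v(2) by simp
      finally have "x - y - k * v \<in> principal a" using ab(2) annD by blast
      then have d: "x - (y + k * v) \<in> ideal_pow M 2" using principal_sub[OF pow_ideal a2]
        by (simp add: diff_diff_eq subset_iff)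
      have G: "is_ideal (ideal_gen (insert v (u ` S)))" by (rule ideal_gen_ideal)
      have "y \<in> ideal_gen (insert v (u ` S))" using y(1) ideal_gen_mono[of "u ` S" "insert v (u ` S)"] by blast
      moreover have "v \<in> ideal_gen (insert v (u ` S))" using ideal_gen_sub by blast
      ultimately have "y + k * v \<in> ideal_gen (insert v (u ` S))" using idealD(2,3)[OF G] by blast
      then show "\<exists>z\<in>ideal_gen (insert v (u ` S)). x - z \<in> ideal_pow M 2" using d by blast
    qed
    have fin: "finite (insert v (u ` S))" using S(1) by simp
    have "mu M \<le> card (insert v (u ` S))" by (rule mu_bound[OF fin _ key]) (use u v in blast)
    also have "\<dots> \<le> card (u ` S) + 1" by (simp add: card_insert_if finite_imageI[OF S(1)])
    also have "\<dots> \<le> card S + 1" using card_image_le[OF S(1)] by simp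
    finally show False using S(2) e by simp
  qed
qed


lemma h0: "hilbert_fun T 0 \<le> 1"
proof -
  have "hilbert_fun T 0 \<le> card {1::'a}"
  proof (rule hf_le)
    show "ideal_pow M 0 = {x + y |x y. x \<in> ideal_gen {1} \<and> y \<in> ideal_pow M (Suc 0)}"
    proof -
      have "z \<in> {x + y |x y. x \<in> ideal_gen {1} \<and> y \<in> ideal_pow M (Suc 0)}" for z
      proof -
        have "(0::'a) \<in> ideal_pow M (Suc 0)" by (rule idealD(1)[OF pow_ideal])
        then show ?thesis unfolding ideal_gen_one by (intro CollectI exI[of _ z] exI[of _ 0]) simp
      qed
      then show ?thesis by auto
    qed
  qed auto
  then show ?thesis by simp
qed

lemma h_big: "n \<ge> 4 \<Longrightarrow> hilbert_fun T n = 0"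
proof -
  assume n: "n \<ge> 4"
  have z1: "ideal_pow M n = {0}" by (rule zero_pow[OF n])
  have z2: "ideal_pow M (Suc n) = {0}" by (rule zero_pow) (use n in simp)
  have "hilbert_fun T n \<le> card ({}::'a set)"
  proof (rule hf_le)
    show "ideal_pow M n = {x + y |x y. x \<in> ideal_gen {} \<and> y \<in> ideal_pow M (Suc n)}"
      unfolding z1 z2 ideal_gen_empty by auto
  qed auto
  then show ?thesis by simp
qed

lemma part1:
  assumes H: "hilbert_series_at_neg1 T = 0" and ezd: "exact_zero_divisor a"
    and aM: "a \<in> M" and a2: "a \<notin> ideal_pow M 2" and cd: "complementary_divisor a b"
    and e: "3 \<le> mu M"
  shows "b \<in> M \<and> b \<notin> ideal_pow M 2"
proof -
  have ab: "ann a = principal b" "ann b = principal a" using cd unfolding complementary_divisor_def by auto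
  have b: "b \<in> M" by (rule bM[OF ezd ab(1)])
  have "b \<notin> ideal_pow M 2"
  proof
    assume b2: "b \<in> ideal_pow M 2"
    have A1: "\<exists>r. r \<in> M \<and> y = r * a" if "y \<in> ideal_pow M 2" for y
    proof -
      have "y * b = 0" by (rule prod22[OF that b2])
      then have "y \<in> principal a" using ab(2) annD by blast
      then obtain r where r: "y = r * a" using principalD by blast
      then have "r \<in> M" using unit_arg[of r a] that a2 by blast
      then show ?thesis using r by blast
    qed
    have A2: "ideal_pow M 3 \<subseteq> {t * a | t. t \<in> ideal_pow M 2}"
      unfolding M3_eq
    proof (rule ideal_prod_least[OF ideal_times[OF pow_ideal]])
      fix z w assume z: "z \<in> ideal_pow M 2" and w: "w \<in> M"
      obtain r where r: "r \<in> M" "z = r * a" using A1[OF z] by blast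
      have "z * w = (r * w) * a" using r by (simp add: ac_simps)
      moreover have "r * w \<in> ideal_pow M 2" by (rule prod11[OF r(1) w])
      ultimately show "z * w \<in> {t * a | t. t \<in> ideal_pow M 2}" by blast
    qed
    obtain S1 where S1: "finite S1" "card S1 = hilbert_fun T 1" "S1 \<subseteq> ideal_pow M 1"
      "ideal_pow M 1 = {x + y |x y. x \<in> ideal_gen S1 \<and> y \<in> ideal_pow M (Suc 1)}"
      using hf_wit[of 1] by blast
    have s12: "Suc 1 = (2::nat)" by simp
    have S1': "M = {x + y |x y. x \<in> ideal_gen S1 \<and> y \<in> ideal_pow M 2}" using S1(4) unfolding P1 s12 .
    have h21: "hilbert_fun T 2 \<le> hilbert_fun T 1"
    proof -
      let ?S2 = "(\<lambda>s. a * s) ` S1"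
      have "hilbert_fun T 2 \<le> card ?S2"
      proof (rule hf_le)
        show "finite ?S2" using S1(1) by simp
        show "?S2 \<subseteq> ideal_pow M 2" using S1(3) unfolding P1 using prod11[OF aM] by blast
        have "Suc 2 = (3::nat)" by simp
        then show "ideal_pow M 2 = {x + y |x y. x \<in> ideal_gen ?S2 \<and> y \<in> ideal_pow M (Suc 2)}"
        proof (simp only:)
          show "ideal_pow M 2 = {x + y |x y. x \<in> ideal_gen ?S2 \<and> y \<in> ideal_pow M 3}"
          proof
            show "ideal_pow M 2 \<subseteq> {x + y |x y. x \<in> ideal_gen ?S2 \<and> y \<in> ideal_pow M 3}"
            proof
              fix y assume y: "y \<in> ideal_pow M 2"
              obtain r where r: "r \<in> M" "y = r * a" using A1[OF y] by blast
              obtain x' y' where xy: "r = x' + y'" "x' \<in> ideal_gen S1" "y' \<in> ideal_pow M 2"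
                using r(1) S1' by blast
              have "y = a * x' + a * y'" using r(2) xy(1) by (simp add: algebra_simps)
              moreover have "a * x' \<in> ideal_gen ?S2" by (rule mult_gen[OF xy(2)])
              moreover have "a * y' \<in> ideal_pow M 3" by (rule prod12[OF aM xy(3)])
              ultimately show "y \<in> {x + y |x y. x \<in> ideal_gen ?S2 \<and> y \<in> ideal_pow M 3}" by blast
            qed
            show "{x + y |x y. x \<in> ideal_gen ?S2 \<and> y \<in> ideal_pow M 3} \<subseteq> ideal_pow M 2"
            proof
              fix z assume "z \<in> {x + y |x y. x \<in> ideal_gen ?S2 \<and> y \<in> ideal_pow M 3}"
              then obtain x y where z: "z = x + y" "x \<in> ideal_gen ?S2" "y \<in> ideal_pow M 3" by blast
              have "ideal_gen ?S2 \<subseteq> ideal_pow M 2"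
                by (rule ideal_gen_least[OF pow_ideal]) (use S1(3) prod11[OF aM] P1 in blast)
              then show "z \<in> ideal_pow M 2" using z M3M2 idealD(2)[OF pow_ideal] by blast
            qed
          qed
        qed
      qed
      also have "\<dots> \<le> card S1" by (rule card_image_le[OF S1(1)])
      finally show ?thesis using S1(2) by simp
    qed
    have Hsum: "hilbert_series_at_neg1 T = (\<Sum>n<4. (-1) ^ n * int (hilbert_fun T n))"
      unfolding hilbert_series_at_neg1_def
    proof (rule sum.mono_neutral_left)
      show "finite {..<4::nat}" by simp
      show "{n. hilbert_fun T n \<noteq> 0} \<subseteq> {..<4}"
      proof
        fix n assume "n \<in> {n. hilbert_fun T n \<noteq> 0}"
        then have hn: "hilbert_fun T n \<noteq> 0" by simp
        show "n \<in> {..<4}"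
        proof (rule ccontr)
          assume "n \<notin> {..<4}"
          then have "n \<ge> 4" by simp
          then have "hilbert_fun T n = 0" by (rule h_big)
          then show False using hn by simp
        qed
      qed
      show "\<forall>i\<in>{..<4} - {n. hilbert_fun T n \<noteq> 0}. (-1) ^ i * int (hilbert_fun T i) = 0" by auto
    qed
    have "(\<Sum>n<4. (-1) ^ n * int (hilbert_fun T n)) =
        int (hilbert_fun T 0) - int (hilbert_fun T 1) + int (hilbert_fun T 2) - int (hilbert_fun T 3)"
    proof -
      have e4: "{..<4::nat} = {0,1,2,3}" by auto
      show ?thesis unfolding e4 by simp
    qed
    then have h3: "hilbert_fun T 3 \<le> 1" using H Hsum h0 h21 by linarith
    obtain S3 where S3: "finite S3" "card S3 = hilbert_fun T 3" "S3 \<subseteq> ideal_pow M 3"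
      "ideal_pow M 3 = {x + y |x y. x \<in> ideal_gen S3 \<and> y \<in> ideal_pow M (Suc 3)}"
      using hf_wit[of 3] by blast
    have "Suc 3 = (4::nat)" by simp
    then have M3g: "ideal_pow M 3 \<subseteq> ideal_gen S3" using S3(4) m4 by auto
    have "\<forall>s\<in>S3. \<exists>t. t \<in> ideal_pow M 2 \<and> s = a * t"
    proof
      fix s assume "s \<in> S3"
      then obtain t where "t \<in> ideal_pow M 2" "s = t * a" using S3(3) A2 by blast
      then show "\<exists>t. t \<in> ideal_pow M 2 \<and> s = a * t" by (metis mult.commute)
    qed
    then obtain u where u: "\<forall>s\<in>S3. u s \<in> ideal_pow M 2 \<and> s = a * u s" by (metis bchoice)
    let ?S2 = "insert b (u ` S3)"
    have finS2: "finite ?S2" using S3(1) by simp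
    have cS2: "card ?S2 \<le> 2"
    proof -
      have "card ?S2 \<le> card (u ` S3) + 1" by (simp add: card_insert_if finite_imageI[OF S3(1)])
      also have "\<dots> \<le> card S3 + 1" using card_image_le[OF S3(1)] by simp
      finally show ?thesis using S3(2) h3 by simp
    qed
    have G2: "is_ideal (ideal_gen ?S2)" by (rule ideal_gen_ideal)
    have M2g: "ideal_pow M 2 \<subseteq> ideal_gen ?S2"
    proof
      fix y assume y: "y \<in> ideal_pow M 2"
      have "a * y \<in> ideal_gen S3" using prod12[OF aM y] M3g by blast
      then obtain y' where y': "y' \<in> ideal_gen (u ` S3)" "a * y = a * y'" using pull[of S3 a u] u by blast
      have "(y - y') * a = 0" using y'(2) by (simp add: algebra_simps)
      then have "y - y' \<in> principal b" using ab(1) annD by blast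
      then obtain r where r: "y - y' = r * b" using principalD by blast
      have "y' \<in> ideal_gen ?S2" using y'(1) ideal_gen_mono[of "u ` S3" ?S2] by blast
      moreover have "b \<in> ideal_gen ?S2" using ideal_gen_sub by blast
      ultimately have "y' + r * b \<in> ideal_gen ?S2" using idealD(2,3)[OF G2] by blast
      moreover have "y = y' + r * b" using r by (simp add: algebra_simps)
      ultimately show "y \<in> ideal_gen ?S2" by simp
    qed
    have "\<forall>s\<in>?S2. \<exists>t. t \<in> M \<and> s = a * t"
    proof
      fix s assume "s \<in> ?S2"
      then have "s \<in> ideal_pow M 2" using b2 u by blast
      then obtain t where "t \<in> M" "s = t * a" using A1 by blast
      then show "\<exists>t. t \<in> M \<and> s = a * t" by (metis mult.commute)
    qed
    then obtain w where w: "\<forall>s\<in>?S2. w s \<in> M \<and> s = a * w s" by (metis bchoice)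
    have key: "\<forall>x\<in>M. \<exists>z\<in>ideal_gen (w ` ?S2). x - z \<in> ideal_pow M 2"
    proof
      fix x assume x: "x \<in> M"
      have "a * x \<in> ideal_gen ?S2" using prod11[OF aM x] M2g by blast
      then obtain x' where x': "x' \<in> ideal_gen (w ` ?S2)" "a * x = a * x'" using pull[of ?S2 a w] w by blast
      have "(x - x') * a = 0" using x'(2) by (simp add: algebra_simps)
      then have "x - x' \<in> principal b" using ab(1) annD by blast
      then have "x - x' \<in> ideal_pow M 2" using principal_sub[OF pow_ideal b2] by blast
      then show "\<exists>z\<in>ideal_gen (w ` ?S2). x - z \<in> ideal_pow M 2" using x'(1) by blast
    qed
    have "mu M \<le> card (w ` ?S2)" by (rule mu_bound[OF finite_imageI[OF finS2] _ key]) (use w in blast)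
    also have "\<dots> \<le> card ?S2" by (rule card_image_le[OF finS2])
    finally show False using cS2 e by simp
  qed
  then show ?thesis using b by blast
qed

end


theorem lemma2p4:
  fixes T :: "'a::comm_ring_1 itself" and e :: nat
  assumes "local_ring T" and "noetherian_ring T"
    and "ideal_pow (max_ideal :: 'a set) 4 = {0}"
    and "e = mu (max_ideal :: 'a set)" and "e \<ge> 3"
  shows "(\<forall>a b :: 'a. hilbert_series_at_neg1 T = 0 \<and> exact_zero_divisor a \<and>
             a \<in> max_ideal - ideal_pow max_ideal 2 \<and> complementary_divisor a b
             \<longrightarrow> b \<in> max_ideal - ideal_pow max_ideal 2)
       \<and> (mu (ideal_pow (max_ideal :: 'a set) 3) + 2 \<le> e \<longrightarrow>
           (\<forall>a :: 'a. exact_zero_divisor a \<and> a \<noteq> 0 \<longrightarrow> a \<notin> ideal_pow max_ideal 2))"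
proof -
  interpret L4 T using assms(1-3) by unfold_locales
  show ?thesis
  proof (intro conjI allI impI)
    fix a b :: 'a
    assume h: "hilbert_series_at_neg1 T = 0 \<and> exact_zero_divisor a \<and>
             a \<in> max_ideal - ideal_pow max_ideal 2 \<and> complementary_divisor a b"
    have "b \<in> M \<and> b \<notin> ideal_pow M 2"
    proof (rule part1)
      show "3 \<le> mu M" using assms(4,5) by simp
    qed (use h in auto)
    then show "b \<in> max_ideal - ideal_pow max_ideal 2" by simp
  next
    fix a :: 'a
    assume "mu (ideal_pow (max_ideal :: 'a set) 3) + 2 \<le> e" "exact_zero_divisor a \<and> a \<noteq> 0"
    then show "a \<notin> ideal_pow max_ideal 2" using part2[of a] assms(4) by auto
  qed
qed

end
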